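(* Let $\mathcal M=\mathcal M_4$ and $n\ge1$. Then $m_{\mathrm{opt}}(n)<4b(n)\le 4\log_2(n+1)$.
   Context: Let $\mathbf X=\{X_1,\dots,X_n\}$ with the uniform measure. For $1\le m\le n$ let $\mathcal X_m$ be the set of finite sequences $\chi=(\chi_1,\dots,\chi_\ell)$ in $\mathbf X$ with exactly $m$ distinct entries and with $\chi_\ell$ different from all earlier entries; $\ell(\chi)$ is the length, $\chi$ has weight $n^{-\ell(\chi)}$, and $E_m[f]=\sum_{\chi\in\mathcal X_m}f(\chi)n^{-\ell(\chi)}$. Let $t_j(\chi)$ be the least $t\ge 0$ with $|\{\chi_1,\dots,\chi_t\}|=j$ ($0\le j\le m$) and $\tau_j(\chi)=t_{j+1}(\chi)-t_j(\chi)-1$ for $1\le j\le m-1$. Let $b(j)=(1+\frac1j)\log_2(j+1)-1$. In model $\mathcal M_4$ (complete memory, numbered shelves) the average total cost is $F(m)=2m\,b(n)\,E_m[1/\ell]+\sum_{j=1}^{m-1}E_m[\tau_j/\ell]\,\frac{j+1}{2}$, and $m_{\mathrm{opt}}(n)$ is the smallest $m\in\{1,\dots,n\}$ minimizing $F(m)$. *)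

theory Defs
  imports "HOL-Analysis.Analysis"
begin

text \<open>The alphabet X = {X_1,...,X_n} is represented by {0..<n}; sequences are lists.\<close>

definition seqs :: "nat \<Rightarrow> nat \<Rightarrow> nat list set" where
  "seqs n m = {xs. set xs \<subseteq> {..<n} \<and> card (set xs) = m \<and> xs \<noteq> [] \<and>
                   last xs \<notin> set (butlast xs)}"

definition Em :: "nat \<Rightarrow> nat \<Rightarrow> (nat list \<Rightarrow> real) \<Rightarrow> real" where
  "Em n m f = (\<Sum>\<^sub>\<infinity>xs\<in>seqs n m. f xs * (1 / real n) ^ length xs)"

definition tt :: "nat \<Rightarrow> nat list \<Rightarrow> nat" where
  "tt j xs = (LEAST t. card (set (take t xs)) = j)"

definition tau :: "nat \<Rightarrow> nat list \<Rightarrow> real" where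
  "tau j xs = real (tt (j+1) xs) - real (tt j xs) - 1"

definition b :: "nat \<Rightarrow> real" where
  "b j = (1 + 1 / real j) * log 2 (real j + 1) - 1"

definition F :: "nat \<Rightarrow> nat \<Rightarrow> real" where
  "F n m = 2 * real m * b n * Em n m (\<lambda>xs. 1 / real (length xs))
         + (\<Sum>j=1..m-1. Em n m (\<lambda>xs. tau j xs / real (length xs)) * (real j + 1) / 2)"

definition m_opt :: "nat \<Rightarrow> nat" where
  "m_opt n = (LEAST m. m \<in> {1..n} \<and> (\<forall>k\<in>{1..n}. F n m \<le> F n k))"

end

theory Submission
  imports Defs
begin


lemma card_take_Suc_le: "card (set (take (Suc t) xs)) \<le> Suc (card (set (take t xs)))"
proof (cases "t < length xs")
  case True
  then have "take (Suc t) xs = take t xs @ [xs ! t]" by (simp add: take_Suc_conv_app_nth)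
  then show ?thesis by (simp add: card_insert_le_m1)
next
  case False then show ?thesis by simp
qed

lemma card_take_mono: "t \<le> t' \<Longrightarrow> card (set (take t xs)) \<le> card (set (take t' xs))"
  by (intro card_mono) (auto simp: set_take_subset_set_take)

lemma ex_take_card:
  assumes "j \<le> card (set xs)"
  shows "\<exists>t\<le>length xs. card (set (take t xs)) = j"
  using assms
proof (induction xs arbitrary: j rule: rev_induct)
  case Nil then show ?case by simp
next
  case (snoc x xs)
  show ?case
  proof (cases "j \<le> card (set xs)")
    case True
    then obtain t where "t \<le> length xs" "card (set (take t xs)) = j" using snoc.IH by blast
    then show ?thesis by (intro exI[of _ t]) auto
  next
    case False
    then have "j = card (set (xs @ [x]))" using snoc.prems by (simp add: card_insert_if split: if_splits)
    then show ?thesis by (intro exI[of _ "length (xs@[x])"]) auto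
  qed
qed

lemma tt_props:
  assumes "j \<le> card (set xs)"
  shows "card (set (take (tt j xs) xs)) = j" "tt j xs \<le> length xs"
proof -
  obtain t where t: "t \<le> length xs" "card (set (take t xs)) = j" using ex_take_card[OF assms] by blast
  show "card (set (take (tt j xs) xs)) = j" unfolding tt_def by (rule LeastI[of _ t]) (use t in auto)
  have "tt j xs \<le> t" unfolding tt_def by (rule Least_le) (use t in auto)
  then show "tt j xs \<le> length xs" using t by simp
qed

lemma tt_le: "card (set (take t xs)) = j \<Longrightarrow> tt j xs \<le> t"
  unfolding tt_def by (rule Least_le)

lemma tt_min: "t < tt j xs \<Longrightarrow> card (set (take t xs)) \<noteq> j"
  unfolding tt_def by (rule not_less_Least)

lemma tt_mono:
  assumes "j < j'" "j' \<le> card (set xs)"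
  shows "tt j xs < tt j' xs"
proof -
  have c: "card (set (take (tt j' xs) xs)) = j'" using tt_props[OF assms(2)] by simp
  obtain t where t: "t \<le> length (take (tt j' xs) xs)" "card (set (take t (take (tt j' xs) xs))) = j"
    using ex_take_card[of j "take (tt j' xs) xs"] c assms by auto
  have "t \<le> tt j' xs" using t(1) by simp
  moreover have "card (set (take t xs)) = j" using t by (simp add: min_def split: if_splits)
  ultimately have "tt j xs \<le> tt j' xs" using tt_le by (meson order_trans)
  moreover have "tt j xs \<noteq> tt j' xs"
  proof
    assume "tt j xs = tt j' xs"
    then show False using tt_props(1)[of j xs] c assms by auto
  qed
  ultimately show ?thesis by simp
qed

lemma tt_take:
  assumes "i \<le> card (set (take T xs))"
  shows "tt i (take T xs) = tt i xs"
proof -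
  obtain t0 where t0: "t0 \<le> length (take T xs)" "card (set (take t0 (take T xs))) = i"
    using ex_take_card[OF assms] by blast
  have t0': "t0 \<le> T" "card (set (take t0 xs)) = i" using t0 by (auto simp: min_def split: if_splits)
  define L where "L = tt i xs"
  have L1: "card (set (take L xs)) = i" unfolding L_def tt_def by (rule LeastI[of _ t0]) (rule t0'(2))
  have L2: "L \<le> t0" unfolding L_def using tt_le t0'(2) by blast
  have "(LEAST t. card (set (take t (take T xs))) = i) = L"
  proof (rule Least_equality)
    show "card (set (take L (take T xs))) = i" using L1 L2 t0'
      by (simp add: min_def)
    fix y assume y: "card (set (take y (take T xs))) = i"
    show "L \<le> y"
    proof (cases "y \<le> T")
      case True then have "card (set (take y xs)) = i" using y by (simp add: min_def)
      then show ?thesis using tt_le unfolding L_def by blast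
    next
      case False then show ?thesis using L2 t0' by simp
    qed
  qed
  then show ?thesis unfolding L_def tt_def by simp
qed

lemma tt_char:
  assumes "card (set (take t xs)) = j" "\<And>t'. t' < t \<Longrightarrow> card (set (take t' xs)) < j"
  shows "tt j xs = t"
  unfolding tt_def
proof (rule Least_equality)
  show "card (set (take t xs)) = j" by fact
  fix y assume "card (set (take y xs)) = j"
  then show "t \<le> y" using assms(2)[of y] by (cases "y < t") auto
qed

lemma seqs_basic:
  assumes "xs \<in> seqs n m"
  shows "xs \<noteq> []" "m \<ge> 1" "set xs \<subseteq> {..<n}" "card (set xs) = m"
    "last xs \<notin> set (butlast xs)" "set xs = insert (last xs) (set (butlast xs))"
    "card (set (butlast xs)) = m - 1"
proof -
  show ne: "xs \<noteq> []" and "set xs \<subseteq> {..<n}" and c: "card (set xs) = m"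
    and nl: "last xs \<notin> set (butlast xs)" using assms by (auto simp: seqs_def)
  have e: "xs = butlast xs @ [last xs]" using ne by simp
  show s: "set xs = insert (last xs) (set (butlast xs))" by (subst e) auto
  have "card (set xs) = Suc (card (set (butlast xs)))" using nl s by simp
  then show "m \<ge> 1" "card (set (butlast xs)) = m - 1" using c by auto
qed

lemma tt_len:
  assumes "xs \<in> seqs n m" shows "tt m xs = length xs"
proof (rule tt_char)
  show "card (set (take (length xs) xs)) = m" using seqs_basic[OF assms] by simp
  fix t' assume "t' < length xs"
  then have "set (take t' xs) \<subseteq> set (butlast xs)"
    by (metis take_butlast set_take_subset)
  then have "card (set (take t' xs)) \<le> card (set (butlast xs))" by (intro card_mono) auto
  then have "card (set (take t' xs)) \<le> m - 1" using seqs_basic(7)[OF assms] by simp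
  then show "card (set (take t' xs)) < m" using seqs_basic(2)[OF assms] by simp
qed

lemma tt_one: assumes "xs \<noteq> []" shows "tt 1 xs = 1"
proof (rule tt_char)
  obtain x ys where "xs = x # ys" using assms by (cases xs) auto
  then show "card (set (take 1 xs)) = 1" by simp
  fix t' :: nat assume "t' < 1" then show "card (set (take t' xs)) < 1" by simp
qed

lemma pref_in:
  assumes "1 \<le> k" "k \<le> card (set xs)" "set xs \<subseteq> {..<n}"
  shows "take (tt k xs) xs \<in> seqs n k"
proof -
  define T where "T = tt k xs"
  have c: "card (set (take T xs)) = k" and TL: "T \<le> length xs" using tt_props[OF assms(2)] T_def by auto
  have T1: "T \<ge> 1" using c assms(1) by (cases T) auto
  have cm: "card (set (take (T - 1) xs)) < k"
  proof -
    have "card (set (take (T - 1) xs)) \<le> k" using card_take_mono[of "T - 1" T xs] c by simp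
    moreover have "card (set (take (T - 1) xs)) \<noteq> k" using tt_min[of "T - 1" k xs] T1 T_def by simp
    ultimately show ?thesis by simp
  qed
  have e: "take T xs = take (T - 1) xs @ [xs ! (T - 1)]" using T1 TL
    by (metis Suc_diff_1 Suc_le_lessD less_le_trans take_Suc_conv_app_nth zero_less_one)
  have nin: "xs ! (T - 1) \<notin> set (take (T - 1) xs)"
  proof
    assume "xs ! (T - 1) \<in> set (take (T - 1) xs)"
    then have "set (take T xs) = set (take (T - 1) xs)" by (subst e) auto
    then show False using c cm by simp
  qed
  show ?thesis unfolding seqs_def T_def[symmetric]
  proof (intro CollectI conjI)
    show "set (take T xs) \<subseteq> {..<n}" using assms(3) set_take_subset[of T xs] by blast
    show "card (set (take T xs)) = k" by fact
    show "take T xs \<noteq> []" using e by simp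
    have "last (take T xs) = xs ! (T - 1)" "butlast (take T xs) = take (T - 1) xs"
      by (subst e, simp)+
    then show "last (take T xs) \<notin> set (butlast (take T xs))" using nin by simp
  qed
qed

lemma app_in:
  assumes "xs \<in> seqs n m" "set r \<subseteq> set xs" "y < n" "y \<notin> set xs"
  shows "xs @ r @ [y] \<in> seqs n (Suc m)" "tt m (xs @ r @ [y]) = length xs"
proof -
  note B = seqs_basic[OF assms(1)]
  have s: "set (xs @ r @ [y]) = insert y (set xs)" using assms(2) by auto
  show "xs @ r @ [y] \<in> seqs n (Suc m)" unfolding seqs_def
  proof (intro CollectI conjI)
    show "set (xs @ r @ [y]) \<subseteq> {..<n}" using s B(3) assms(3) by auto
    show "card (set (xs @ r @ [y])) = Suc m" using s B(4) assms(4) by simp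
    show "xs @ r @ [y] \<noteq> []" by simp
    have "butlast (xs @ r @ [y]) = xs @ r" by (simp add: butlast_append)
    then show "last (xs @ r @ [y]) \<notin> set (butlast (xs @ r @ [y]))" using assms(2,4) by auto
  qed
  show "tt m (xs @ r @ [y]) = length xs"
  proof (rule tt_char)
    show "card (set (take (length xs) (xs @ r @ [y]))) = m" using B by simp
    fix t' assume "t' < length xs"
    then have "take t' (xs @ r @ [y]) = take t' (butlast xs)" by (simp add: take_butlast)
    then have "set (take t' (xs @ r @ [y])) \<subseteq> set (butlast xs)" by (metis set_take_subset)
    then have "card (set (take t' (xs @ r @ [y]))) \<le> card (set (butlast xs))" by (intro card_mono) auto
    then have "card (set (take t' (xs @ r @ [y]))) \<le> m - 1" using B(7) by simp
    then show "card (set (take t' (xs @ r @ [y]))) < m" using B(2) by simp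
  qed
qed

lemma decomp:
  assumes "ch \<in> seqs n (Suc m)" "1 \<le> m"
  defines "T \<equiv> tt m ch"
  shows "T \<le> length (butlast ch)" "take T ch \<in> seqs n m"
    "set (drop T (butlast ch)) \<subseteq> set (take T ch)" "last ch \<notin> set (take T ch)" "last ch < n"
    "take T ch @ drop T (butlast ch) @ [last ch] = ch"
proof -
  note B = seqs_basic[OF assms(1)]
  have cb: "card (set (butlast ch)) = m" using B by simp
  have "tt m (butlast ch) \<le> length (butlast ch)" using tt_props(2)[of m "butlast ch"] cb by simp
  have "card (set (take (tt m (butlast ch)) (butlast ch))) = m" using tt_props(1)[of m "butlast ch"] cb by simp
  moreover have "take (tt m (butlast ch)) (butlast ch) = take (tt m (butlast ch)) ch"
    using \<open>tt m (butlast ch) \<le> length (butlast ch)\<close> by (metis butlast_conv_take min.absorb1 take_take length_butlast)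
  ultimately have "T \<le> tt m (butlast ch)" unfolding T_def using tt_le by metis
  then show TL: "T \<le> length (butlast ch)" using \<open>tt m (butlast ch) \<le> length (butlast ch)\<close> by simp
  show "take T ch \<in> seqs n m" unfolding T_def using pref_in[of m ch n] B assms(2) by simp
  have tb: "take T ch = take T (butlast ch)" using TL by (metis butlast_conv_take min.absorb1 take_take length_butlast)
  have sub: "set (take T ch) \<subseteq> set (butlast ch)" using tb by (simp add: set_take_subset)
  have "card (set (take T ch)) = m" unfolding T_def using tt_props(1)[of m ch] B by simp
  then have eq: "set (take T ch) = set (butlast ch)" using sub cb by (simp add: card_subset_eq)
  show "set (drop T (butlast ch)) \<subseteq> set (take T ch)" using eq set_drop_subset by metis
  show "last ch \<notin> set (take T ch)" using eq B by simp
  show "last ch < n" using B by auto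
  show "take T ch @ drop T (butlast ch) @ [last ch] = ch" using tb B(1)
    by (metis append_assoc append_butlast_last_id append_take_drop_id)
qed



lemma has_sum_Sigma_nonneg:
  fixes f :: "'a \<times> 'b \<Rightarrow> real"
  assumes "\<And>x. x \<in> A \<Longrightarrow> ((\<lambda>y. f (x, y)) has_sum g x) (B x)"
    "(g has_sum S) A" "\<And>x y. x \<in> A \<Longrightarrow> y \<in> B x \<Longrightarrow> f (x, y) \<ge> 0"
  shows "(f has_sum S) (Sigma A B)"
proof (rule has_sum_SigmaI[OF assms(1,2)])
  show "f summable_on Sigma A B"
    by (rule summable_on_SigmaI[OF assms(1) has_sum_imp_summable[OF assms(2)] assms(3)])
qed

lemma has_sum_setsum:
  fixes f :: "'j \<Rightarrow> 'a \<Rightarrow> real"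
  assumes "finite J" "\<And>j. j \<in> J \<Longrightarrow> (f j has_sum s j) A"
  shows "((\<lambda>x. \<Sum>j\<in>J. f j x) has_sum (\<Sum>j\<in>J. s j)) A"
  using assms
proof (induction J rule: finite_induct)
  case empty then show ?case by simp
next
  case (insert a J)
  then show ?case by (simp add: has_sum_add)
qed

lemma geom_mass:
  assumes "m < n"
  shows "((\<lambda>t. real m ^ t * (real n - real m) * (1 / real n) ^ (t + 1)) has_sum 1) UNIV"
proof -
  have n0: "real n > 0" using assms by simp
  have q: "norm (real m / real n) < 1" using assms by simp
  have "(\<lambda>t. (real m / real n) ^ t * ((real n - real m) / real n)) sums
        (1 / (1 - real m / real n) * ((real n - real m) / real n))"
    by (rule sums_mult2[OF geometric_sums[OF q]])
  also have "1 / (1 - real m / real n) * ((real n - real m) / real n) = 1"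
    using n0 assms by (simp add: field_simps)
  finally have s: "(\<lambda>t. (real m / real n) ^ t * ((real n - real m) / real n)) sums 1" .
  have e: "(real m / real n) ^ t * ((real n - real m) / real n) =
        real m ^ t * (real n - real m) * (1 / real n) ^ (t + 1)" for t
    by (simp add: power_divide field_simps)
  have h: "((\<lambda>t. (real m / real n) ^ t * ((real n - real m) / real n)) has_sum 1) UNIV"
    by (rule sums_nonneg_imp_has_sum[OF s]) (use assms in auto)
  show ?thesis using h by (simp only: e)
qed

lemma inner_mass:
  assumes "finite S" "card S = m" "m < n" "S \<subseteq> {..<n}"
  shows "((\<lambda>(r, y). (1 / real n) ^ (length r + 1)) has_sum 1)
           (Sigma {r. set r \<subseteq> S} (\<lambda>_. {..<n} - S))"
proof -
  define q where "q = 1 / real n"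
  have cardD: "card ({..<n} - S) = n - m" using assms by (simp add: card_Diff_subset)
  have mn: "real (n - m) = real n - real m" using assms by simp
  have L: "((\<lambda>r. (real n - real m) * q ^ (length r + 1)) has_sum
            (real m ^ t * (real n - real m) * q ^ (t + 1))) {r. set r \<subseteq> S \<and> length r = t}" for t
  proof (rule has_sum_finiteI)
    show "finite {r. set r \<subseteq> S \<and> length r = t}" using assms(1) by (rule finite_lists_length_eq)
    have "(\<Sum>r\<in>{r. set r \<subseteq> S \<and> length r = t}. (real n - real m) * q ^ (length r + 1)) =
          (\<Sum>r\<in>{r. set r \<subseteq> S \<and> length r = t}. (real n - real m) * q ^ (t + 1))"
      by (rule sum.cong) auto
    also have "\<dots> = real m ^ t * (real n - real m) * q ^ (t + 1)"
    proof -
      have c: "real (card {r. set r \<subseteq> S \<and> length r = t}) = real m ^ t"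
        using card_lists_length_eq[OF assms(1), of t] assms(2) by simp
      show ?thesis by (simp only: sum_constant c)
    qed
    finally show "real m ^ t * (real n - real m) * q ^ (t + 1) =
       (\<Sum>r\<in>{r. set r \<subseteq> S \<and> length r = t}. (real n - real m) * q ^ (length r + 1))" by (rule sym)
  qed
  have Sg: "((\<lambda>(t, r). (real n - real m) * q ^ (length r + 1)) has_sum 1)
             (Sigma UNIV (\<lambda>t. {r. set r \<subseteq> S \<and> length r = t}))"
    by (rule has_sum_Sigma_nonneg[OF _ geom_mass[OF assms(3)]]) (use L assms q_def in auto)
  have R: "((\<lambda>r. (real n - real m) * q ^ (length r + 1)) has_sum 1) {r. set r \<subseteq> S}"
    using Sg by (subst has_sum_reindex_bij_witness[where j = "\<lambda>r. (length r, r)" and i = snd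
          and T = "Sigma UNIV (\<lambda>t. {r. set r \<subseteq> S \<and> length r = t})"
          and h = "\<lambda>(t, r). (real n - real m) * q ^ (length r + 1)"]) auto
  have I: "((\<lambda>y. q ^ (length r + 1)) has_sum ((real n - real m) * q ^ (length r + 1))) ({..<n} - S)" for r
    by (rule has_sum_finiteI) (use cardD mn in auto)
  show ?thesis unfolding q_def[symmetric]
    by (rule has_sum_Sigma_nonneg[OF _ R]) (use I q_def in auto)
qed



lemma one_step:
  assumes m1: "1 \<le> m" and mn: "m < n" and g0: "\<And>p. p \<in> seqs n m \<Longrightarrow> g p \<ge> 0"
    and hs: "((\<lambda>p. g p * (1 / real n) ^ length p) has_sum S) (seqs n m)"
  shows "((\<lambda>c. g (take (tt m c) c) * (1 / real n) ^ length c) has_sum S) (seqs n (Suc m))"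
proof -
  define q where "q = 1 / real n"
  define Sig where "Sig = Sigma (seqs n m) (\<lambda>p. Sigma {r. set r \<subseteq> set p} (\<lambda>_. {..<n} - set p))"
  define f where "f = (\<lambda>(p, (r::nat list, y::nat)). g p * q ^ length p * q ^ (length r + 1))"
  have inner: "((\<lambda>z. f (p, z)) has_sum (g p * q ^ length p))
        (Sigma {r. set r \<subseteq> set p} (\<lambda>_. {..<n} - set p))" if p: "p \<in> seqs n m" for p
  proof -
    note B = seqs_basic[OF p]
    have "((\<lambda>(r, y). (1 / real n) ^ (length r + 1)) has_sum 1)
           (Sigma {r. set r \<subseteq> set p} (\<lambda>_. {..<n} - set p))"
      by (rule inner_mass) (use B mn in auto)
    from has_sum_cmult_right[OF this, of "g p * q ^ length p"]
    show ?thesis unfolding f_def q_def by (simp add: case_prod_beta)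
  qed
  have Sg: "(f has_sum S) Sig" unfolding Sig_def
  proof (rule has_sum_Sigma_nonneg[OF inner])
    show "((\<lambda>p. g p * q ^ length p) has_sum S) (seqs n m)" using hs q_def by simp
    fix p z assume "p \<in> seqs n m" "z \<in> Sigma {r. set r \<subseteq> set p} (\<lambda>_. {..<n} - set p)"
    then show "0 \<le> f (p, z)" using g0 unfolding f_def q_def by (auto simp: case_prod_beta)
  qed
  show ?thesis
  proof (subst has_sum_reindex_bij_witness[where T = Sig and h = f
        and j = "\<lambda>c. (take (tt m c) c, (drop (tt m c) (butlast c), last c))"
        and i = "\<lambda>(p, (r, y)). p @ r @ [y]"])
    fix a assume a: "a \<in> seqs n (Suc m)"
    note D = decomp[OF a m1]
    show "(case (take (tt m a) a, drop (tt m a) (butlast a), last a) of (p, r, y) \<Rightarrow> p @ r @ [y]) = a"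
      using D(6) by simp
    show "(take (tt m a) a, drop (tt m a) (butlast a), last a) \<in> Sig"
      unfolding Sig_def using D(2-5) by auto
    have TL: "tt m a \<le> length (butlast a)" by (rule D(1))
    have len: "length (take (tt m a) a) + (length (drop (tt m a) (butlast a)) + 1) = length a"
      using TL seqs_basic(1)[OF a] by (cases a) auto
    show "f (take (tt m a) a, drop (tt m a) (butlast a), last a) =
          g (take (tt m a) a) * (1 / real n) ^ length a"
    proof -
      have e: "q ^ length (take (tt m a) a) * q ^ (length (drop (tt m a) (butlast a)) + 1) = q ^ length a"
        by (simp only: power_add[symmetric] len)
      have "f (take (tt m a) a, drop (tt m a) (butlast a), last a) =
        g (take (tt m a) a) * (q ^ length (take (tt m a) a) * q ^ (length (drop (tt m a) (butlast a)) + 1))"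
        unfolding f_def by (simp only: prod.case mult.assoc)
      also have "\<dots> = g (take (tt m a) a) * (1 / real n) ^ length a" using e by (simp only: q_def)
      finally show ?thesis .
    qed
  next
    fix bb assume bb: "bb \<in> Sig"
    then obtain p r y where bb': "bb = (p, (r, y))" "p \<in> seqs n m" "set r \<subseteq> set p" "y < n" "y \<notin> set p"
      unfolding Sig_def by auto
    note AI = app_in[OF bb'(2-5)]
    show "(\<lambda>(p, r, y). p @ r @ [y]) bb \<in> seqs n (Suc m)" using AI bb' by simp
    show "(take (tt m ((\<lambda>(p, r, y). p @ r @ [y]) bb)) ((\<lambda>(p, r, y). p @ r @ [y]) bb),
           drop (tt m ((\<lambda>(p, r, y). p @ r @ [y]) bb)) (butlast ((\<lambda>(p, r, y). p @ r @ [y]) bb)),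
           last ((\<lambda>(p, r, y). p @ r @ [y]) bb)) = bb"
      using AI(2) bb' by (simp add: butlast_append)
  next
    show "(f has_sum S) Sig" by (rule Sg)
  qed (rule refl)
qed

lemma seqs_one: "seqs n 1 = (\<lambda>x. [x]) ` {..<n}"
proof
  show "seqs n 1 \<subseteq> (\<lambda>x. [x]) ` {..<n}"
  proof
    fix p assume p: "p \<in> seqs n 1"
    note B = seqs_basic[OF p]
    have "set (butlast p) = {}" using B(7) by simp
    then have "butlast p = []" by simp
    then have "p = [last p]" using B(1) by (metis append_butlast_last_id append_Nil)
    moreover have "last p < n" using B(1,3) by (meson last_in_set lessThan_iff subsetD)
    ultimately show "p \<in> (\<lambda>x. [x]) ` {..<n}" by (metis image_eqI lessThan_iff)
  qed
  show "(\<lambda>x. [x]) ` {..<n} \<subseteq> seqs n 1" by (auto simp: seqs_def)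
qed

lemma mass:
  assumes "1 \<le> m" "m \<le> n"
  shows "((\<lambda>p. (1 / real n) ^ length p) has_sum 1) (seqs n m)"
  using assms
proof (induction m rule: dec_induct)
  case base
  have "((\<lambda>x. (1 / real n) ^ length [x]) has_sum 1) {..<n}"
    by (rule has_sum_finiteI) (use assms in auto)
  then show ?case unfolding seqs_one
    by (subst has_sum_reindex) (auto simp: inj_on_def o_def)
next
  case (step m)
  from one_step[of m n "\<lambda>_. 1" 1] step show ?case by simp
qed

lemma pref_pref:
  assumes c: "c \<in> seqs n (Suc m)" and k: "k \<le> m"
  shows "take (tt k (take (tt m c) c)) (take (tt m c) c) = take (tt k c) c"
proof -
  note B = seqs_basic[OF c]
  have cm: "card (set (take (tt m c) c)) = m" using tt_props(1)[of m c] B by simp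
  have e: "tt k (take (tt m c) c) = tt k c" by (rule tt_take) (use cm k in simp)
  have "tt k c \<le> tt m c" using tt_mono[of k m c] k B by (cases "k = m") auto
  then show ?thesis unfolding e by (simp add: min_def)
qed

lemma push:
  assumes k1: "1 \<le> k" and km: "k \<le> m" and mn: "m \<le> n" and h0: "\<And>p. p \<in> seqs n k \<Longrightarrow> h p \<ge> 0"
    and hs: "((\<lambda>p. h p * (1 / real n) ^ length p) has_sum S) (seqs n k)"
  shows "((\<lambda>c. h (take (tt k c) c) * (1 / real n) ^ length c) has_sum S) (seqs n m)"
  using km mn
proof (induction m rule: dec_induct)
  case base
  show ?case using hs by (subst has_sum_cong[where g = "\<lambda>p. h p * (1 / real n) ^ length p"])
    (auto simp: tt_len)
next
  case (step m)
  have g0: "h (take (tt k p) p) \<ge> 0" if p: "p \<in> seqs n m" for p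
  proof -
    note B = seqs_basic[OF p]
    have "take (tt k p) p \<in> seqs n k" by (rule pref_in) (use k1 B step.hyps in auto)
    then show ?thesis by (rule h0)
  qed
  have HS: "((\<lambda>c. h (take (tt k (take (tt m c) c)) (take (tt m c) c)) * (1 / real n) ^ length c) has_sum S)
          (seqs n (Suc m))"
    by (rule one_step[OF _ _ g0 step.IH]) (use k1 step in auto)
  have EQ: "\<And>c. c \<in> seqs n (Suc m) \<Longrightarrow>
      h (take (tt k (take (tt m c) c)) (take (tt m c) c)) * (1 / real n) ^ length c =
      h (take (tt k c) c) * (1 / real n) ^ length c"
    by (simp only: pref_pref[OF _ step.hyps(1)])
  show ?case by (rule has_sum_cong[THEN iffD1, OF EQ HS])
qed



lemma summ:
  assumes "1 \<le> m" "m \<le> n" "\<And>p. p \<in> seqs n m \<Longrightarrow> \<bar>f p\<bar> \<le> 1"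
  shows "(\<lambda>p. f p * (1 / real n) ^ length p) summable_on seqs n m"
proof -
  have "(\<lambda>p. norm (f p * (1 / real n) ^ length p)) summable_on seqs n m"
  proof (rule summable_on_comparison_test)
    show "(\<lambda>p. (1 / real n) ^ length p) summable_on seqs n m"
      using mass[OF assms(1,2)] by (rule has_sum_imp_summable)
    fix p assume "p \<in> seqs n m"
    then have "\<bar>f p\<bar> \<le> 1" by (rule assms(3))
    then show "norm (f p * (1 / real n) ^ length p) \<le> (1 / real n) ^ length p"
      by (simp add: abs_mult mult_left_le_one_le)
  qed simp
  then show ?thesis using summable_on_iff_abs_summable_on_real by blast
qed

lemma tau_bounds:
  assumes p: "p \<in> seqs n m" and j: "1 \<le> j" "j < m"
  shows "0 \<le> tau j p" "tau j p \<le> real (length p)"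
proof -
  note B = seqs_basic[OF p]
  have "tt j p < tt (Suc j) p" using tt_mono[of j "Suc j" p] B j by simp
  then show "0 \<le> tau j p" unfolding tau_def by simp
  have "tt (Suc j) p \<le> length p" using tt_props(2)[of "Suc j" p] B j by simp
  then show "tau j p \<le> real (length p)" unfolding tau_def by simp
qed

lemma tele:
  assumes "xs \<noteq> []" "1 \<le> K" "K \<le> card (set xs)"
  shows "real (tt K xs) = real K + (\<Sum>j\<in>{1..<K}. tau j xs)"
  using assms(2,3)
proof (induction K rule: dec_induct)
  case base then show ?case using tt_one[OF assms(1)] by simp
next
  case (step K)
  have "(\<Sum>j\<in>{1..<Suc K}. tau j xs) = (\<Sum>j\<in>{1..<K}. tau j xs) + tau K xs"
    using step.hyps by simp
  then show ?case using step unfolding tau_def by simp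
qed



definition Iv :: "nat \<Rightarrow> nat \<Rightarrow> nat list \<Rightarrow> real" where
  "Iv n m p = (2 * real m * b n + (\<Sum>j\<in>{1..<m}. tau j p * (real j + 1) / 2)) / real (length p)"

lemma b_facts:
  assumes "1 \<le> n"
  shows "1 < 4 * b n" "b n \<le> log 2 (real n + 1)"
proof -
  define L where "L = log 2 (real n + 1)"
  have bL: "b n = L + L / real n - 1" unfolding b_def L_def using assms by (simp add: field_simps)
  have L1: "1 \<le> L" unfolding L_def using le_log_of_power[of 2 1 "real n + 1"] assms by simp
  have "Suc n \<le> 2 ^ n" using assms
  proof (induction n rule: dec_induct)
    case base then show ?case by simp
  next
    case (step k) then show ?case by simp
  qed
  then have r: "1 + real n \<le> 2 ^ n" using of_nat_le_iff[of "Suc n" "2^n", where 'a=real] by simp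
  then have "L \<le> real n" unfolding L_def using log_of_power_le[of "Suc n" 2 n] by (simp add: add.commute)
  then have "L / real n \<le> 1" using assms by simp
  then show "b n \<le> log 2 (real n + 1)" using bL L_def by simp
  show "1 < 4 * b n"
  proof (cases "n \<le> 2")
    case True
    then have "n = 1 \<or> n = 2" using assms by auto
    then show ?thesis
    proof
      assume "n = 1" then show ?thesis unfolding b_def by simp
    next
      assume n2: "n = 2"
      have "1 < L" unfolding L_def n2 using less_log_iff[of 2 3 1] by simp
      then show ?thesis using bL n2 by simp
    qed
  next
    case False
    then have "2 ^ 2 \<le> real n + 1" by simp
    then have "2 \<le> L" unfolding L_def using le_log_of_power[of 2 2 "real n + 1"] by simp
    moreover have "L / real n \<ge> 0" using L1 by simp
    ultimately show ?thesis using bL by linarith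
  qed
qed

lemma ratio:
  fixes c a a2 s s2 k m :: real
  assumes "0 \<le> s" "0 \<le> s2" "0 < k" "k \<le> m" "a \<le> c * s" "c * s2 \<le> a2" "0 \<le> c"
  shows "(c * k + a) / (k + s) \<le> (c * m + a + a2) / (m + s + s2)"
proof -
  have p1: "0 < k + s" "0 < m + s + s2" using assms by auto
  have a0: "0 \<le> a2" using assms by (metis mult_nonneg_nonneg order_trans)
  have e: "(c * m + a + a2) * (k + s) - (c * k + a) * (m + s + s2) =
           (m - k) * (c * s - a) + ((k + s) * a2 - s2 * (c * k + a))"
    by (simp add: algebra_simps)
  have t1: "0 \<le> (m - k) * (c * s - a)" using assms by simp
  have "(k + s) * (c * s2) \<le> (k + s) * a2" using assms p1 by (intro mult_left_mono) auto
  moreover have "s2 * (c * k + a) \<le> s2 * (c * k + c * s)" using assms by (intro mult_left_mono) auto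
  moreover have "s2 * (c * k + c * s) = (k + s) * (c * s2)" by (simp add: algebra_simps)
  ultimately have t2: "0 \<le> (k + s) * a2 - s2 * (c * k + a)" by linarith
  have "(c * k + a) * (m + s + s2) \<le> (c * m + a + a2) * (k + s)" using e t1 t2 by linarith
  then show ?thesis using p1 by (simp add: field_simps)
qed

lemma Iv_has_sum:
  assumes m1: "1 \<le> m" and mn: "m \<le> n"
  shows "((\<lambda>p. Iv n m p * (1 / real n) ^ length p) has_sum F n m) (seqs n m)"
proof -
  define w where "w = (\<lambda>p::nat list. (1 / real n) ^ length p)"
  have lp: "real (length p) \<ge> 1" if "p \<in> seqs n m" for p
    using seqs_basic(1)[OF that] by (cases p) auto
  have S1: "(\<lambda>p. 1 / real (length p) * (1 / real n) ^ length p) summable_on seqs n m"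
    by (rule summ[OF m1 mn]) (use lp in \<open>auto simp: divide_le_eq_1\<close>)
  have H1: "((\<lambda>p. 2 * real m * b n * (1 / real (length p) * w p)) has_sum
             (2 * real m * b n * Em n m (\<lambda>xs. 1 / real (length xs)))) (seqs n m)"
    unfolding Em_def w_def by (rule has_sum_cmult_right[OF has_sum_infsum[OF S1]])
  have H2: "((\<lambda>p. tau j p / real (length p) * w p * (real j + 1) / 2) has_sum
             (Em n m (\<lambda>xs. tau j xs / real (length xs)) * (real j + 1) / 2)) (seqs n m)"
    if j: "j \<in> {1..<m}" for j
  proof -
    have "(\<lambda>p. tau j p / real (length p) * (1 / real n) ^ length p) summable_on seqs n m"
    proof (rule summ[OF m1 mn])
      fix p assume p: "p \<in> seqs n m"
      have "0 \<le> tau j p" "tau j p \<le> real (length p)" using tau_bounds[OF p] j by auto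
      then show "\<bar>tau j p / real (length p)\<bar> \<le> 1" using lp[OF p] by (simp add: divide_le_eq_1)
    qed
    from has_sum_divide_const[OF has_sum_cmult_left[OF has_sum_infsum[OF this]], of "real j + 1" 2]
    show ?thesis unfolding Em_def w_def by simp
  qed
  have H: "((\<lambda>p. 2 * real m * b n * (1 / real (length p) * w p) +
              (\<Sum>j\<in>{1..<m}. tau j p / real (length p) * w p * (real j + 1) / 2)) has_sum
           (2 * real m * b n * Em n m (\<lambda>xs. 1 / real (length xs)) +
            (\<Sum>j\<in>{1..<m}. Em n m (\<lambda>xs. tau j xs / real (length xs)) * (real j + 1) / 2))) (seqs n m)"
    by (rule has_sum_add[OF H1 has_sum_setsum]) (use H2 in auto)
  have ivl: "{1..m - 1} = {1..<m}" using m1 by auto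
  have F: "F n m = 2 * real m * b n * Em n m (\<lambda>xs. 1 / real (length xs)) +
            (\<Sum>j\<in>{1..<m}. Em n m (\<lambda>xs. tau j xs / real (length xs)) * (real j + 1) / 2)"
    unfolding F_def ivl by simp
  have eq: "2 * real m * b n * (1 / real (length p) * w p) +
              (\<Sum>j\<in>{1..<m}. tau j p / real (length p) * w p * (real j + 1) / 2) =
            Iv n m p * (1 / real n) ^ length p" for p
  proof -
    have "(\<Sum>j\<in>{1..<m}. tau j p / real (length p) * w p * (real j + 1) / 2) =
          (\<Sum>j\<in>{1..<m}. tau j p * (real j + 1) / 2) * (w p / real (length p))"
    proof -
      have "(\<Sum>j\<in>{1..<m}. tau j p / real (length p) * w p * (real j + 1) / 2) =
          (\<Sum>j\<in>{1..<m}. tau j p * (real j + 1) / 2 * (w p / real (length p)))"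
        by (rule sum.cong) (simp_all add: field_simps)
      also have "\<dots> = (\<Sum>j\<in>{1..<m}. tau j p * (real j + 1) / 2) * (w p / real (length p))"
        by (rule sum_distrib_right[symmetric])
      finally show ?thesis .
    qed
    then have "2 * real m * b n * (1 / real (length p) * w p) +
              (\<Sum>j\<in>{1..<m}. tau j p / real (length p) * w p * (real j + 1) / 2) =
        2 * real m * b n * (w p / real (length p)) +
          (\<Sum>j\<in>{1..<m}. tau j p * (real j + 1) / 2) * (w p / real (length p))" by simp
    also have "\<dots> = (2 * real m * b n + (\<Sum>j\<in>{1..<m}. tau j p * (real j + 1) / 2)) * (w p / real (length p))"
      by (simp only: distrib_right)
    also have "\<dots> = Iv n m p * (1 / real n) ^ length p" unfolding Iv_def w_def by simp
    finally show ?thesis .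
  qed
  show ?thesis using H unfolding F[symmetric] eq .
qed

lemma Iv_nonneg:
  assumes "p \<in> seqs n m" "1 \<le> n"
  shows "0 \<le> Iv n m p"
proof -
  have "0 \<le> b n" using b_facts(1)[OF assms(2)] by simp
  moreover have "0 \<le> (\<Sum>j\<in>{1..<m}. tau j p * (real j + 1) / 2)"
    by (rule sum_nonneg) (use tau_bounds(1)[OF assms(1)] in auto)
  ultimately show ?thesis unfolding Iv_def by simp
qed

lemma pointwise:
  assumes p: "p \<in> seqs n m" and k1: "1 \<le> k" and km: "k \<le> m"
    and kb: "real k \<le> 4 * b n" and bk: "4 * b n \<le> real k + 1"
  shows "Iv n k (take (tt k p) p) \<le> Iv n m p"
proof -
  note B = seqs_basic[OF p]
  define q where "q = take (tt k p) p"
  define c where "c = 2 * b n"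
  define s where "s = (\<Sum>j\<in>{1..<k}. tau j p)"
  define s2 where "s2 = (\<Sum>j\<in>{k..<m}. tau j p)"
  define a where "a = (\<Sum>j\<in>{1..<k}. tau j p * (real j + 1) / 2)"
  define a2 where "a2 = (\<Sum>j\<in>{k..<m}. tau j p * (real j + 1) / 2)"
  have tk: "tt k p \<le> length p" using tt_props(2)[of k p] B km by simp
  have lq: "real (length q) = real k + s" unfolding q_def s_def
    using tele[OF B(1) k1] tk B km by simp
  have lp: "real (length p) = real m + s + s2"
  proof -
    have "real (length p) = real m + (\<Sum>j\<in>{1..<m}. tau j p)"
      using tele[OF B(1) B(2)] tt_len[OF p] B by simp
    also have "(\<Sum>j\<in>{1..<m}. tau j p) = s + s2" unfolding s_def s2_def
      using sum.atLeastLessThan_concat[of 1 k m "\<lambda>j. tau j p"] k1 km by simp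
    finally show ?thesis by simp
  qed
  have cq: "card (set q) = k" unfolding q_def using tt_props(1)[of k p] B km by simp
  have tq: "tau j q = tau j p" if j: "j \<in> {1..<k}" for j
  proof -
    have "tt j q = tt j p" unfolding q_def by (rule tt_take) (use cq j q_def in simp)
    moreover have "tt (j + 1) q = tt (j + 1) p" unfolding q_def by (rule tt_take) (use cq j q_def in simp)
    ultimately show ?thesis unfolding tau_def by simp
  qed
  have Iq: "Iv n k q = (c * real k + a) / (real k + s)"
  proof -
    have "(\<Sum>j\<in>{1..<k}. tau j q * (real j + 1) / 2) = a" unfolding a_def
      by (rule sum.cong) (use tq in auto)
    then show ?thesis unfolding Iv_def lq c_def by simp
  qed
  have Ip: "Iv n m p = (c * real m + a + a2) / (real m + s + s2)"
  proof -
    have "(\<Sum>j\<in>{1..<m}. tau j p * (real j + 1) / 2) = a + a2" unfolding a_def a2_def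
      using sum.atLeastLessThan_concat[of 1 k m "\<lambda>j. tau j p * (real j + 1) / 2"] k1 km by simp
    then show ?thesis unfolding Iv_def lp c_def by (simp add: add.assoc)
  qed
  have t0: "0 \<le> tau j p" if "j \<in> {1..<m}" for j using tau_bounds(1)[OF p] that by auto
  have s0: "0 \<le> s" unfolding s_def by (rule sum_nonneg) (use t0 km in auto)
  have s20: "0 \<le> s2" unfolding s2_def by (rule sum_nonneg) (use t0 k1 in auto)
  have "a \<le> (\<Sum>j\<in>{1..<k}. tau j p * c)" unfolding a_def
  proof (rule sum_mono)
    fix j assume j: "j \<in> {1..<k}"
    have "(real j + 1) / 2 \<le> c" using j kb c_def by auto
    then have "tau j p * ((real j + 1) / 2) \<le> tau j p * c" using t0[of j] j km by (intro mult_left_mono) auto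
    then show "tau j p * (real j + 1) / 2 \<le> tau j p * c" by simp
  qed
  then have as: "a \<le> c * s" unfolding s_def by (simp add: sum_distrib_left mult.commute)
  have "(\<Sum>j\<in>{k..<m}. tau j p * c) \<le> a2" unfolding a2_def
  proof (rule sum_mono)
    fix j assume j: "j \<in> {k..<m}"
    have "c \<le> (real j + 1) / 2" using j bk c_def by auto
    then have "tau j p * c \<le> tau j p * ((real j + 1) / 2)" using t0[of j] j k1 by (intro mult_left_mono) auto
    then show "tau j p * c \<le> tau j p * (real j + 1) / 2" by simp
  qed
  then have as2: "c * s2 \<le> a2" unfolding s2_def by (simp add: sum_distrib_left mult.commute)
  have c0: "0 \<le> c" using kb c_def by simp
  have "(c * real k + a) / (real k + s) \<le> (c * real m + a + a2) / (real m + s + s2)"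
    by (rule ratio) (use s0 s20 k1 km as as2 c0 in auto)
  then show ?thesis using Iq Ip q_def by simp
qed



lemma F_mono:
  assumes n1: "1 \<le> n" and k1: "1 \<le> k" and kj: "k \<le> j" and jn: "j \<le> n"
    and kb: "real k \<le> 4 * b n" and bk: "4 * b n \<le> real k + 1"
  shows "F n k \<le> F n j"
proof (rule has_sum_mono)
  show "((\<lambda>c. Iv n k (take (tt k c) c) * (1 / real n) ^ length c) has_sum F n k) (seqs n j)"
    by (rule push[OF k1 kj jn _ Iv_has_sum[OF k1]]) (use Iv_nonneg n1 kj jn in auto)
  show "((\<lambda>p. Iv n j p * (1 / real n) ^ length p) has_sum F n j) (seqs n j)"
    by (rule Iv_has_sum) (use k1 kj jn in auto)
  fix p assume p: "p \<in> seqs n j"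
  have "Iv n k (take (tt k p) p) \<le> Iv n j p" by (rule pointwise[OF p k1 kj kb bk])
  then show "Iv n k (take (tt k p) p) * (1 / real n) ^ length p \<le> Iv n j p * (1 / real n) ^ length p"
    by (intro mult_right_mono) auto
qed

theorem proposition2:
  fixes n :: nat
  assumes "n \<ge> 1"
  shows "real (m_opt n) < 4 * b n \<and> 4 * b n \<le> 4 * log 2 (real n + 1)"
proof -
  note bf = b_facts[OF assms]
  define k where "k = nat \<lceil>4 * b n\<rceil> - 1"
  have cg: "2 \<le> \<lceil>4 * b n\<rceil>" using bf(1) by simp
  have n1: "1 \<le> nat \<lceil>4 * b n\<rceil>" using cg by linarith
  have "real (nat \<lceil>4 * b n\<rceil>) = real_of_int \<lceil>4 * b n\<rceil>" using cg by simp
  then have rk: "real k = real_of_int \<lceil>4 * b n\<rceil> - 1" unfolding k_def using n1 by (simp add: of_nat_diff)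
  have k1: "1 \<le> k" unfolding k_def using cg by linarith
  have kb: "real k < 4 * b n" using rk ceiling_correct[of "4 * b n"] by linarith
  have bk: "4 * b n \<le> real k + 1" using rk le_of_int_ceiling[of "4 * b n"] by simp
  define K where "K = min k n"
  have K: "1 \<le> K" "K \<le> n" "K \<le> k" using k1 assms unfolding K_def by auto
  define v where "v = Min (F n ` {1..K})"
  have "v \<in> F n ` {1..K}" unfolding v_def by (rule Min_in) (use K in auto)
  then obtain m0 where m0: "m0 \<in> {1..K}" "F n m0 = v" by auto
  have m0min: "F n m0 \<le> F n j" if "j \<in> {1..K}" for j
    using m0(2) that unfolding v_def by (metis Min_le finite_atLeastAtMost finite_imageI image_eqI)
  have all: "F n m0 \<le> F n j" if j: "j \<in> {1..n}" for j
  proof (cases "j \<le> K")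
    case True then show ?thesis using m0min j by auto
  next
    case False
    then have kK: "K = k" "k < j" using j K unfolding K_def by auto
    have "F n m0 \<le> F n k" using m0min[of k] kK K by auto
    also have "F n k \<le> F n j" by (rule F_mono) (use assms k1 kK j kb bk in auto)
    finally show ?thesis .
  qed
  have "m_opt n \<le> m0" unfolding m_opt_def by (rule Least_le) (use m0 all K in auto)
  then have "real (m_opt n) \<le> real k" using m0 K by auto
  then show ?thesis using kb bf(2) by linarith
qed


end
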